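(* Let $D$ be a division ring which is finite dimensional over its central subfield $K=Z(D)$, let ${}_DM$ be a finite dimensional left vector space over $D$ and let $\varphi:M\to M$ be a nilpotent $D$-linear map. Then $C_\varphi=\{\psi\in\mathrm{Hom}_D(M,M)\mid\psi\circ\varphi=\varphi\circ\psi\}$ is a $K$-subspace of $\mathrm{Hom}_D(M,M)$ and \[\dim_K(C_\varphi)\le\dim_K(D)\cdot\dim_D(\ker(\varphi))\cdot\dim_D(M).\] *)

theory Defs
  imports Main "HOL-Library.Function_Algebras"
begin

definition indep_over :: "'s::zero set \<Rightarrow> ('s \<Rightarrow> 'v::comm_monoid_add \<Rightarrow> 'v) \<Rightarrow> 'v set \<Rightarrow> bool" where
  "indep_over S sc B \<longleftrightarrow>
     (\<forall>F c. finite F \<and> F \<subseteq> B \<and> (\<forall>v\<in>F. c v \<in> S) \<and> (\<Sum>v\<in>F. sc (c v) v) = 0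
        \<longrightarrow> (\<forall>v\<in>F. c v = 0))"

definition span_over :: "'s set \<Rightarrow> ('s \<Rightarrow> 'v::comm_monoid_add \<Rightarrow> 'v) \<Rightarrow> 'v set \<Rightarrow> 'v set" where
  "span_over S sc B =
     {(\<Sum>v\<in>F. sc (c v) v) | F c. finite F \<and> F \<subseteq> B \<and> (\<forall>v\<in>F. c v \<in> S)}"

definition basis_over :: "'s::zero set \<Rightarrow> ('s \<Rightarrow> 'v::comm_monoid_add \<Rightarrow> 'v) \<Rightarrow> 'v set \<Rightarrow> 'v set \<Rightarrow> bool" where
  "basis_over S sc V B \<longleftrightarrow> B \<subseteq> V \<and> indep_over S sc B \<and> span_over S sc B = V"

definition fin_dim_over :: "'s::zero set \<Rightarrow> ('s \<Rightarrow> 'v::comm_monoid_add \<Rightarrow> 'v) \<Rightarrow> 'v set \<Rightarrow> bool" where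
  "fin_dim_over S sc V \<longleftrightarrow> (\<exists>B. finite B \<and> basis_over S sc V B)"

text \<open>Dimension = cardinality of a (finite) basis; meaningful for finite-dimensional spaces.\<close>
definition dim_over :: "'s::zero set \<Rightarrow> ('s \<Rightarrow> 'v::comm_monoid_add \<Rightarrow> 'v) \<Rightarrow> 'v set \<Rightarrow> nat" where
  "dim_over S sc V = card (SOME B. finite B \<and> basis_over S sc V B)"

definition subspace_over :: "'s set \<Rightarrow> ('s \<Rightarrow> 'v::comm_monoid_add \<Rightarrow> 'v) \<Rightarrow> 'v set \<Rightarrow> 'v set \<Rightarrow> bool" where
  "subspace_over S sc W V \<longleftrightarrow> W \<subseteq> V \<and> 0 \<in> W \<and>
     (\<forall>x\<in>W. \<forall>y\<in>W. x + y \<in> W) \<and> (\<forall>c\<in>S. \<forall>x\<in>W. sc c x \<in> W)"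

definition center :: "'a::ring set" where
  "center = {c. \<forall>x. c * x = x * c}"

definition left_vector_space :: "('a::division_ring \<Rightarrow> 'b::ab_group_add \<Rightarrow> 'b) \<Rightarrow> bool" where
  "left_vector_space smul \<longleftrightarrow>
     (\<forall>a x y. smul a (x + y) = smul a x + smul a y) \<and>
     (\<forall>a b x. smul (a + b) x = smul a x + smul b x) \<and>
     (\<forall>a b x. smul (a * b) x = smul a (smul b x)) \<and>
     (\<forall>x. smul 1 x = x)"

definition lin_map :: "('a \<Rightarrow> 'b::ab_group_add \<Rightarrow> 'b) \<Rightarrow> ('b \<Rightarrow> 'b) \<Rightarrow> bool" where
  "lin_map smul f \<longleftrightarrow> (\<forall>x y. f (x + y) = f x + f y) \<and> (\<forall>a x. f (smul a x) = smul a (f x))"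

definition Hom :: "('a \<Rightarrow> 'b::ab_group_add \<Rightarrow> 'b) \<Rightarrow> ('b \<Rightarrow> 'b) set" where
  "Hom smul = {f. lin_map smul f}"

text \<open>Action of scalars on Hom_D(M,M): (c psi)(x) = c psi(x) (a K-action for central c).\<close>
definition hom_smul :: "('a \<Rightarrow> 'b \<Rightarrow> 'b) \<Rightarrow> 'a \<Rightarrow> ('b \<Rightarrow> 'b) \<Rightarrow> ('b \<Rightarrow> 'b)" where
  "hom_smul smul c psi = (\<lambda>x. smul c (psi x))"

definition nilpotent_map :: "('b::zero \<Rightarrow> 'b) \<Rightarrow> bool" where
  "nilpotent_map f \<longleftrightarrow> (\<exists>n. (f ^^ n) = (\<lambda>_. 0))"

definition ker :: "('b \<Rightarrow> 'c::zero) \<Rightarrow> 'b set" where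
  "ker f = {x. f x = 0}"

definition centralizer :: "('a \<Rightarrow> 'b::ab_group_add \<Rightarrow> 'b) \<Rightarrow> ('b \<Rightarrow> 'b) \<Rightarrow> ('b \<Rightarrow> 'b) set" where
  "centralizer smul phi = {psi \<in> Hom smul. psi \<circ> phi = phi \<circ> psi}"

end

theory Submission
  imports Defs "HOL.Vector_Spaces"
begin


lemma center_0: "(0::'a::division_ring) \<in> center" and center_1: "(1::'a::division_ring) \<in> center"
  unfolding center_def by simp_all
lemma center_iff: "a \<in> center \<longleftrightarrow> (\<forall>x. a * x = x * a)" by (simp add: center_def)
lemma center_add: "a \<in> center \<Longrightarrow> b \<in> center \<Longrightarrow> a + b \<in> center"
  unfolding center_iff by (metis distrib_left distrib_right)
lemma center_minus: "a \<in> center \<Longrightarrow> - a \<in> center"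
  unfolding center_iff by (metis mult_minus_left mult_minus_right)
lemma center_diff: "a \<in> center \<Longrightarrow> b \<in> center \<Longrightarrow> a - b \<in> center"
  by (metis center_add center_minus diff_conv_add_uminus)
lemma center_mult: "a \<in> center \<Longrightarrow> b \<in> center \<Longrightarrow> a * b \<in> center"
  unfolding center_iff by (metis mult.assoc)
lemma center_inverse: "(a::'a::division_ring) \<in> center \<Longrightarrow> inverse a \<in> center"
proof -
  assume a: "a \<in> center"
  show ?thesis
  proof (cases "a = 0")
    case True then show ?thesis by (simp add: center_0)
  next
    case False
    { fix x :: 'a
      have "a * x = x * a" using a by (simp add: center_iff)
      hence "inverse a * (a * x) * inverse a = inverse a * (x * a) * inverse a" by simp
      hence "inverse a * x = x * inverse a" using False
        by (simp add: mult.assoc) (metis False mult.assoc mult.left_neutral right_inverse left_inverse mult.right_neutral)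
    }
    then show ?thesis by (simp add: center_iff)
  qed
qed

lemma center_comm: "a \<in> center \<Longrightarrow> a * b = b * a" by (simp add: center_iff)

typedef (overloaded) ('a::division_ring) ctr = "center :: 'a set" morphisms Rep_ctr Abs_ctr
  using center_0 by blast

setup_lifting type_definition_ctr

instantiation ctr :: (division_ring) field
begin
lift_definition zero_ctr :: "'a ctr" is 0 by (rule center_0)
lift_definition one_ctr :: "'a ctr" is 1 by (rule center_1)
lift_definition plus_ctr :: "'a ctr \<Rightarrow> 'a ctr \<Rightarrow> 'a ctr" is "(+)" by (rule center_add)
lift_definition minus_ctr :: "'a ctr \<Rightarrow> 'a ctr \<Rightarrow> 'a ctr" is "(-)" by (rule center_diff)
lift_definition uminus_ctr :: "'a ctr \<Rightarrow> 'a ctr" is "uminus" by (rule center_minus)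
lift_definition times_ctr :: "'a ctr \<Rightarrow> 'a ctr \<Rightarrow> 'a ctr" is "(*)" by (rule center_mult)
lift_definition inverse_ctr :: "'a ctr \<Rightarrow> 'a ctr" is "inverse" by (rule center_inverse)
lift_definition divide_ctr :: "'a ctr \<Rightarrow> 'a ctr \<Rightarrow> 'a ctr" is "\<lambda>a b. a * inverse b"
  by (rule center_mult, assumption, rule center_inverse)
instance
proof
  fix a b c :: "'a ctr"
  show "a * b * c = a * (b * c)" by transfer (simp add: mult.assoc)
  show "a * b = b * a" by transfer (erule center_comm)
  show "1 * a = a" by transfer simp
  show "a + b + c = a + (b + c)" by transfer (simp add: add.assoc)
  show "a + b = b + a" by transfer (simp add: add.commute)
  show "0 + a = a" by transfer simp
  show "- a + a = 0" by transfer simp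
  show "a - b = a + - b" by transfer simp
  show "(a + b) * c = a * c + b * c" by transfer (simp add: distrib_right)
  show "(0::'a ctr) \<noteq> 1" by transfer simp
  show "a \<noteq> 0 \<Longrightarrow> inverse a * a = 1" by transfer simp
  show "a div b = a * inverse b" by transfer simp
  show "inverse (0::'a ctr) = 0" by transfer simp
qed
end

lemma Rep_ctr_simps[simp]: "Rep_ctr 0 = 0" "Rep_ctr 1 = 1" "Rep_ctr (a + b) = Rep_ctr a + Rep_ctr b"
  "Rep_ctr (a * b) = Rep_ctr a * Rep_ctr b" "Rep_ctr (- a) = - Rep_ctr a" "Rep_ctr (a - b) = Rep_ctr a - Rep_ctr b"
  by (transfer, simp)+

lemma Rep_ctr_center: "Rep_ctr a \<in> center" using Rep_ctr by blast
lemma Rep_Abs_ctr: "x \<in> center \<Longrightarrow> Rep_ctr (Abs_ctr x) = x" by (simp add: Abs_ctr_inverse)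
lemma Rep_ctr_eq0[simp]: "Rep_ctr a = 0 \<longleftrightarrow> a = 0" by (metis Rep_ctr_inject Rep_ctr_simps(1))




lemma sum_fun_apply: "(sum f S) x = sum (\<lambda>i. f i x) S"
  by (induct S rule: infinite_finite_induct) simp_all

locale lvs =
  fixes smul :: "'a::division_ring \<Rightarrow> 'b::ab_group_add \<Rightarrow> 'b"
  assumes lvs: "left_vector_space smul"
begin

lemma sadd_r: "smul a (x + y) = smul a x + smul a y" using lvs by (simp add: left_vector_space_def)
lemma sadd_l: "smul (a + b) x = smul a x + smul b x" using lvs by (simp add: left_vector_space_def)
lemma smult: "smul (a * b) x = smul a (smul b x)" using lvs by (simp add: left_vector_space_def)
lemma sone[simp]: "smul 1 x = x" using lvs by (simp add: left_vector_space_def)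
lemma szero_r[simp]: "smul a 0 = 0"
  using sadd_r[of a 0 0] by simp
lemma szero_l[simp]: "smul 0 x = 0"
  using sadd_l[of 0 0 x] by simp
lemma sminus_r: "smul a (- x) = - smul a x"
proof -
  have h: "0 = smul a (- x) + smul a x" using sadd_r[of a "- x" x] by (simp only: add.left_inverse szero_r)
  show ?thesis using h[symmetric] by (rule eq_neg_iff_add_eq_0[THEN iffD2])
qed
lemma sminus_l: "smul (- a) x = - smul a x"
proof -
  have h: "0 = smul (- a) x + smul a x" using sadd_l[of "- a" a x] by (simp only: add.left_inverse szero_l)
  show ?thesis using h[symmetric] by (rule eq_neg_iff_add_eq_0[THEN iffD2])
qed
lemma sdiff_r: "smul a (x - y) = smul a x - smul a y"
  unfolding diff_conv_add_uminus by (simp only: sadd_r sminus_r)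
lemma sdiff_l: "smul (a - b) x = smul a x - smul b x"
  unfolding diff_conv_add_uminus by (simp only: sadd_l sminus_l)
lemma ssum_r: "smul a (sum f S) = sum (\<lambda>i. smul a (f i)) S"
  by (induct S rule: infinite_finite_induct) (auto simp: sadd_r)
lemma ssum_l: "smul (sum f S) x = sum (\<lambda>i. smul (f i) x) S"
  by (induct S rule: infinite_finite_induct) (auto simp: sadd_l)

lemma lin_add: "lin_map smul f \<Longrightarrow> f (x + y) = f x + f y" by (simp add: lin_map_def)
lemma lin_smul: "lin_map smul f \<Longrightarrow> f (smul a x) = smul a (f x)" by (simp add: lin_map_def)
lemma lin_0: "lin_map smul f \<Longrightarrow> f 0 = 0"
  using lin_add[of f 0 0] by simp
lemma lin_minus: "lin_map smul f \<Longrightarrow> f (- x) = - f x"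
proof -
  assume f: "lin_map smul f"
  have h: "0 = f (- x) + f x" using lin_add[OF f, of "- x" x] lin_0[OF f] by (simp only: add.left_inverse)
  show ?thesis using h[symmetric] by (rule eq_neg_iff_add_eq_0[THEN iffD2])
qed
lemma lin_diff: "lin_map smul f \<Longrightarrow> f (x - y) = f x - f y"
  unfolding diff_conv_add_uminus by (simp only: lin_add lin_minus)
lemma lin_sum: "lin_map smul f \<Longrightarrow> f (sum g S) = sum (\<lambda>i. f (g i)) S"
  by (induct S rule: infinite_finite_induct) (auto simp: lin_add lin_0)

definition sK :: "'a ctr \<Rightarrow> 'b \<Rightarrow> 'b" where "sK c x = smul (Rep_ctr c) x"
definition sF :: "'a ctr \<Rightarrow> ('b \<Rightarrow> 'b) \<Rightarrow> ('b \<Rightarrow> 'b)" where "sF c f = hom_smul smul (Rep_ctr c) f"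

sublocale M: vector_space sK
  by unfold_locales (simp_all add: sK_def sadd_r sadd_l smult)

sublocale F: vector_space sF
  by unfold_locales (simp_all add: sF_def hom_smul_def sadd_r sadd_l smult fun_eq_iff)

lemma sF_apply: "sF c f x = smul (Rep_ctr c) (f x)" by (simp add: sF_def hom_smul_def)

lemma F_indep_from: assumes "indep_over center (hom_smul smul) B" shows "F.independent B"
proof -
  { fix t u v assume t: "finite t" "t \<subseteq> B" and s: "(\<Sum>v\<in>t. sF (u v) v) = 0" and v: "v \<in> t"
    have "(\<Sum>v\<in>t. hom_smul smul (Rep_ctr (u v)) v) = 0" using s by (simp add: sF_def)
    hence "finite t \<and> t \<subseteq> B \<and> (\<forall>v\<in>t. Rep_ctr (u v) \<in> center) \<and> (\<Sum>v\<in>t. hom_smul smul (Rep_ctr (u v)) v) = 0"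
      using t Rep_ctr_center by blast
    hence "Rep_ctr (u v) = 0"
      by (rule assms[unfolded indep_over_def, rule_format, of t "\<lambda>v. Rep_ctr (u v)", OF _ v])
    hence "u v = 0" by simp }
  thus ?thesis unfolding F.independent_explicit_module by blast
qed

lemma F_indep_to: assumes "F.independent B" shows "indep_over center (hom_smul smul) B"
  unfolding indep_over_def
proof (intro allI impI ballI)
  fix Fs c v assume h: "finite Fs \<and> Fs \<subseteq> B \<and> (\<forall>v\<in>Fs. c v \<in> center) \<and> (\<Sum>v\<in>Fs. hom_smul smul (c v) v) = 0"
    and v: "v \<in> Fs"
  have "(\<Sum>v\<in>Fs. sF (Abs_ctr (c v)) v) = (\<Sum>v\<in>Fs. hom_smul smul (c v) v)"
    using h by (intro sum.cong) (auto simp: sF_def Rep_Abs_ctr)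
  hence s0: "(\<Sum>v\<in>Fs. sF (Abs_ctr (c v)) v) = 0" using h by simp
  have "Abs_ctr (c v) = 0" using F.independentD[OF assms _ _ s0 v] h by simp
  thus "c v = 0" using Rep_Abs_ctr[of "c v"] h v by simp
qed

lemma F_span_eq: "F.span B = span_over center (hom_smul smul) B"
proof
  show "F.span B \<subseteq> span_over center (hom_smul smul) B"
  proof
    fix y assume "y \<in> F.span B"
    then obtain t r where t: "finite t" "t \<subseteq> B" "y = (\<Sum>a\<in>t. sF (r a) a)"
      unfolding F.span_explicit by blast
    thus "y \<in> span_over center (hom_smul smul) B" unfolding span_over_def
      by (intro CollectI exI[of _ t] exI[of _ "\<lambda>a. Rep_ctr (r a)"]) (simp add: sF_def Rep_ctr_center)
  qed
  show "span_over center (hom_smul smul) B \<subseteq> F.span B"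
  proof
    fix y assume "y \<in> span_over center (hom_smul smul) B"
    then obtain t c where t: "finite t" "t \<subseteq> B" "\<forall>v\<in>t. c v \<in> center" "y = (\<Sum>v\<in>t. hom_smul smul (c v) v)"
      unfolding span_over_def by blast
    have "y = (\<Sum>v\<in>t. sF (Abs_ctr (c v)) v)" using t by (auto simp: sF_def Rep_Abs_ctr intro!: sum.cong)
    thus "y \<in> F.span B" using t unfolding F.span_explicit
      by (intro CollectI exI[of _ t] exI[of _ "\<lambda>v. Abs_ctr (c v)"]) simp
  qed
qed

end



locale setting = lvs +
  fixes BD :: "'a set" and BM :: "'b set"
  assumes BDfin: "finite BD" and BDb: "basis_over center (*) UNIV BD"
    and BMfin: "finite BM" and BMb: "basis_over UNIV smul UNIV BM"
begin

definition Pr :: "'b set \<Rightarrow> 'b set" where "Pr B = (\<lambda>(e,b). smul e b) ` (BD \<times> B)"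
definition gd :: "'b set \<Rightarrow> 'b set \<Rightarrow> bool" where
  "gd U G \<longleftrightarrow> (\<forall>c. (\<Sum>g\<in>G. smul (c g) g) \<in> U \<longrightarrow> (\<forall>g\<in>G. c g = 0))"

lemma indep_overD: "indep_over S sc B \<Longrightarrow> finite F \<Longrightarrow> F \<subseteq> B \<Longrightarrow> (\<forall>v\<in>F. c v \<in> S) \<Longrightarrow> (\<Sum>v\<in>F. sc (c v) v) = 0 \<Longrightarrow> v \<in> F \<Longrightarrow> c v = 0"
  unfolding indep_over_def by blast

lemma gdD: "gd U G \<Longrightarrow> (\<Sum>g\<in>G. smul (c g) g) \<in> U \<Longrightarrow> g \<in> G \<Longrightarrow> c g = 0"
  unfolding gd_def by blast

lemma BD_indep: "indep_over center (*) BD" using BDb by (simp add: basis_over_def)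

lemma BD_indep_all: assumes "\<forall>e\<in>BD. k e \<in> center" "(\<Sum>e\<in>BD. k e * e) = 0" "e \<in> BD" shows "k e = 0"
  by (rule indep_overD[OF BD_indep BDfin subset_refl assms])

lemma BD_nz: "0 \<notin> BD"
proof
  assume "0 \<in> BD"
  hence "(\<lambda>_. 1::'a) 0 = 0"
    using indep_overD[OF BD_indep, of "{0}" "\<lambda>_. 1" 0] by (simp add: center_1)
  thus False by simp
qed

lemma BD_ne: "BD \<noteq> {}"
proof
  assume "BD = {}"
  have "(1::'a) \<in> span_over center (*) BD" using BDb by (simp add: basis_over_def)
  then show False using \<open>BD = {}\<close> by (auto simp: span_over_def)
qed

lemma card_BD_pos: "card BD > 0" using BD_ne BDfin by auto

lemma finite_Pr: "finite B \<Longrightarrow> finite (Pr B)" using BDfin by (simp add: Pr_def)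
lemma card_Pr_le: "finite B \<Longrightarrow> card (Pr B) \<le> card BD * card B"
  unfolding Pr_def by (rule order_trans[OF card_image_le]) (simp_all add: BDfin card_cartesian_product)

lemma spanK: assumes "x \<in> span_over UNIV smul B" shows "x \<in> M.span (Pr B)"
proof -
  obtain F c where F: "finite F" "F \<subseteq> B" "x = (\<Sum>v\<in>F. smul (c v) v)"
    using assms unfolding span_over_def by blast
  have "smul (c v) v \<in> M.span (Pr B)" if v: "v \<in> F" for v
  proof -
    have "c v \<in> span_over center (*) BD" using BDb by (simp add: basis_over_def)
    then obtain F' c' where F': "finite F'" "F' \<subseteq> BD" "\<forall>e\<in>F'. c' e \<in> center" "c v = (\<Sum>e\<in>F'. c' e * e)"
      unfolding span_over_def by blast
    have "smul (c v) v = (\<Sum>e\<in>F'. sK (Abs_ctr (c' e)) (smul e v))"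
      using F' by (auto simp: ssum_l smult sK_def Rep_Abs_ctr intro!: sum.cong)
    also have "\<dots> \<in> M.span (Pr B)"
      using F' v F by (intro M.span_sum M.span_scale M.span_base) (auto simp: Pr_def)
    finally show ?thesis .
  qed
  thus ?thesis using F by (auto intro: M.span_sum)
qed

lemma UNIV_span: "UNIV \<subseteq> M.span (Pr BM)"
  using spanK BMb by (auto simp: basis_over_def)

lemma gd_one: assumes "finite G" "gd U G" "g \<in> G" "smul e g \<in> U" shows "e = 0"
proof -
  have "(\<Sum>h\<in>G. smul (if h = g then e else 0) h) = (\<Sum>h\<in>G. if h = g then smul e g else 0)"
    by (rule sum.cong) auto
  also have "\<dots> = smul e g" using assms by simp
  finally have "(\<Sum>h\<in>G. smul (if h = g then e else 0) h) \<in> U" using assms by simp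
  from gdD[OF assms(2) this assms(3)] show ?thesis by simp
qed

lemma gd_two: assumes "finite G" "gd U G" "g \<in> G" "g' \<in> G" "g \<noteq> g'" "smul e g - smul e' g' \<in> U" shows "e = 0"
proof -
  have "(\<Sum>h\<in>G. smul (if h = g then e else if h = g' then - e' else 0) h)
      = (\<Sum>h\<in>G. (if h = g then smul e g else 0) + (if h = g' then smul (-e') g' else 0))"
    by (rule sum.cong) (auto simp: assms(5))
  also have "\<dots> = smul e g - smul e' g'" using assms
    by (simp add: sum.distrib sminus_l)
  finally have "(\<Sum>h\<in>G. smul (if h = g then e else if h = g' then - e' else 0) h) \<in> U" using assms by simp
  from gdD[OF assms(2) this assms(3)] show ?thesis by simp
qed

lemma prod_inj: assumes "finite G" "gd U G" "0 \<in> U" shows "inj_on (\<lambda>(e,b). smul e b) (BD \<times> G)"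
proof (rule inj_onI, clarify)
  fix e g e' g' assume h: "e \<in> BD" "g \<in> G" "e' \<in> BD" "g' \<in> G" "smul e g = smul e' g'"
  show "e = e' \<and> g = g'"
  proof (cases "g = g'")
    case True
    hence "smul (e - e') g \<in> U" using h assms by (simp add: sdiff_l)
    hence "e - e' = 0" using gd_one assms h by blast
    thus ?thesis using True by simp
  next
    case False
    hence "e = 0" using gd_two[OF assms(1,2) h(2,4) False, of e e'] h assms by simp
    thus ?thesis using BD_nz h by simp
  qed
qed

lemma card_Pr: assumes "finite G" "gd U G" "0 \<in> U" shows "card (Pr G) = card BD * card G"
  unfolding Pr_def using card_image[OF prod_inj[OF assms]] by (simp add: card_cartesian_product)

lemma prod_indep:
  assumes G: "finite G" "gd U G" and U: "M.subspace U" and Bu: "Bu \<subseteq> U" "M.independent Bu"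
  shows "M.independent (Pr G \<union> Bu)" "Pr G \<inter> Bu = {}"
proof -
  have U0: "0 \<in> U" using U M.subspace_0 by blast
  note inj = prod_inj[OF G U0]
  show "Pr G \<inter> Bu = {}"
  proof (rule ccontr)
    assume "Pr G \<inter> Bu \<noteq> {}"
    then obtain e g where "e \<in> BD" "g \<in> G" "smul e g \<in> U" using Bu by (auto simp: Pr_def)
    thus False using gd_one[OF G] BD_nz by blast
  qed
  show "M.independent (Pr G \<union> Bu)"
    unfolding M.independent_explicit_module
  proof (intro allI impI)
    fix t u v assume t: "finite t" "t \<subseteq> Pr G \<union> Bu" and s: "(\<Sum>v\<in>t. sK (u v) v) = 0" and v: "v \<in> t"
    define tP where "tP = t \<inter> Pr G"
    define tB where "tB = t - Pr G"
    have tsplit: "(\<Sum>v\<in>t. sK (u v) v) = (\<Sum>v\<in>tP. sK (u v) v) + (\<Sum>v\<in>tB. sK (u v) v)"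
      unfolding tP_def tB_def using t(1) by (rule sum.Int_Diff)
    have tB: "tB \<subseteq> Bu" "finite tB" using t by (auto simp: tB_def)
    have tBU: "(\<Sum>v\<in>tB. sK (u v) v) \<in> U"
      using tB Bu by (intro M.subspace_sum[OF U] M.subspace_scale[OF U]) auto
    have "(\<Sum>v\<in>tP. sK (u v) v) = - (\<Sum>v\<in>tB. sK (u v) v)"
      using s tsplit by (simp add: eq_neg_iff_add_eq_0)
    hence inU: "(\<Sum>v\<in>tP. sK (u v) v) \<in> U" using tBU M.subspace_neg[OF U] by simp
    define k where "k g e = (if smul e g \<in> t then Rep_ctr (u (smul e g)) else 0)" for g e
    define cg where "cg g = (\<Sum>e\<in>BD. k g e * e)" for g
    have eq: "(\<Sum>v\<in>tP. sK (u v) v) = (\<Sum>g\<in>G. smul (cg g) g)"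
    proof -
      have "(\<Sum>v\<in>tP. sK (u v) v) = (\<Sum>v\<in>Pr G. if v \<in> t then sK (u v) v else 0)"
        unfolding tP_def Int_commute[of t] by (rule sum.inter_restrict[OF finite_Pr[OF G(1)]])
      also have "\<dots> = (\<Sum>(e,g)\<in>BD\<times>G. if smul e g \<in> t then sK (u (smul e g)) (smul e g) else 0)"
        unfolding Pr_def by (subst sum.reindex[OF inj]) (simp add: case_prod_unfold)
      also have "\<dots> = (\<Sum>e\<in>BD. \<Sum>g\<in>G. if smul e g \<in> t then sK (u (smul e g)) (smul e g) else 0)"
        by (simp add: sum.cartesian_product)
      also have "\<dots> = (\<Sum>g\<in>G. \<Sum>e\<in>BD. if smul e g \<in> t then sK (u (smul e g)) (smul e g) else 0)"
        by (rule sum.swap)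
      also have "\<dots> = (\<Sum>g\<in>G. smul (cg g) g)"
        by (rule sum.cong[OF refl]) (auto simp: cg_def ssum_l k_def smult sK_def intro!: sum.cong)
      finally show ?thesis .
    qed
    have cg0: "\<forall>g\<in>G. cg g = 0" using gdD[OF G(2), of cg] inU eq by simp
    have kc: "k g e \<in> center" for g e by (simp add: k_def Rep_ctr_center center_0)
    have uP: "u w = 0" if w: "w \<in> tP" for w
    proof -
      obtain e g where eg: "e \<in> BD" "g \<in> G" "w = smul e g" using w by (auto simp: tP_def Pr_def)
      have "k g e = 0" using BD_indep_all[of "k g" e] kc cg0 eg by (simp add: cg_def)
      thus ?thesis using eg w by (simp add: k_def tP_def)
    qed
    have "(\<Sum>v\<in>tP. sK (u v) v) = 0" using uP by simp
    hence tB0: "(\<Sum>v\<in>tB. sK (u v) v) = 0" using s tsplit by simp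
    show "u v = 0"
    proof (cases "v \<in> tP")
      case True thus ?thesis using uP by blast
    next
      case False hence "v \<in> tB" using v by (auto simp: tP_def tB_def)
      thus ?thesis using M.independentD[OF Bu(2) tB(2) tB(1) tB0] by blast
    qed
  qed
qed

end



context setting begin

definition dsub :: "'b set \<Rightarrow> bool" where
  "dsub V \<longleftrightarrow> 0 \<in> V \<and> (\<forall>x\<in>V. \<forall>y\<in>V. x + y \<in> V) \<and> (\<forall>a. \<forall>x\<in>V. smul a x \<in> V)"

lemma dsub_sum: "dsub V \<Longrightarrow> (\<And>i. i \<in> S \<Longrightarrow> f i \<in> V) \<Longrightarrow> sum f S \<in> V"
  by (induct S rule: infinite_finite_induct) (auto simp: dsub_def)

lemma dsub_span: "dsub V \<Longrightarrow> B \<subseteq> V \<Longrightarrow> span_over UNIV smul B \<subseteq> V"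
  unfolding span_over_def by (auto intro!: dsub_sum) (auto simp: dsub_def)

lemma gd_bound: assumes "finite G" "gd {0} G" shows "card G \<le> card BM"
proof -
  have "M.independent (Pr G \<union> {})" by (rule prod_indep(1)[OF assms M.subspace_single_0]) (simp_all add: M.independent_empty)
  hence "card (Pr G) \<le> card (Pr BM)"
    using M.independent_span_bound[OF finite_Pr[OF BMfin] _ subset_trans[OF subset_UNIV UNIV_span]] by auto
  also have "\<dots> \<le> card BD * card BM" by (rule card_Pr_le[OF BMfin])
  finally have "card BD * card G \<le> card BD * card BM" using card_Pr[OF assms] by simp
  thus ?thesis using card_BD_pos by simp
qed

lemma gd_indep: assumes "finite G" "gd {0} G" shows "indep_over UNIV smul G"
  unfolding indep_over_def
proof (intro allI impI ballI)
  fix F c v assume h: "finite F \<and> F \<subseteq> G \<and> (\<forall>v\<in>F. c v \<in> UNIV) \<and> (\<Sum>v\<in>F. smul (c v) v) = 0" and v: "v \<in> F"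
  define c' where "c' g = (if g \<in> F then c g else 0)" for g
  have "(\<Sum>g\<in>G. smul (c' g) g) = (\<Sum>g\<in>F. smul (c g) g)"
    using h assms(1) by (intro sum.mono_neutral_cong_right) (auto simp: c'_def)
  hence "c' v = 0" using assms h v unfolding gd_def by auto
  thus "c v = 0" using v by (simp add: c'_def)
qed

lemma sum_insert_split: "finite G \<Longrightarrow> x \<notin> G \<Longrightarrow> (\<Sum>g\<in>insert x G. smul (c g) g) = smul (c x) x + (\<Sum>g\<in>G. smul (c g) g)"
  by simp

lemma solve_x: assumes "c \<noteq> 0" "smul c x + (\<Sum>g\<in>G. smul (d g) g) = w"
  shows "x = (\<Sum>g\<in>G. smul (- inverse c * d g) g) + smul (inverse c) w"
proof -
  have "(\<Sum>g\<in>G. smul (- inverse c * d g) g) = smul (- inverse c) (\<Sum>g\<in>G. smul (d g) g)"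
    by (simp add: ssum_r smult[symmetric])
  also have "(\<Sum>g\<in>G. smul (d g) g) = w - smul c x" using assms(2) by (simp add: algebra_simps)
  finally have "(\<Sum>g\<in>G. smul (- inverse c * d g) g) + smul (inverse c) w = smul (inverse c * c) x"
    by (simp add: sdiff_r sminus_l smult)
  thus ?thesis using assms(1) by simp
qed

lemma exists_basis: assumes V: "dsub V" shows "\<exists>B. finite B \<and> basis_over UNIV smul V B"
proof -
  define P where "P n \<longleftrightarrow> (\<exists>G. finite G \<and> G \<subseteq> V \<and> gd {0} G \<and> card G = n)" for n
  have "P 0" unfolding P_def by (intro exI[of _ "{}"]) (auto simp: gd_def)
  moreover have "\<forall>n. P n \<longrightarrow> id n < card BM + 1" using gd_bound unfolding P_def by fastforce
  ultimately have "\<exists>n. P n \<and> (\<forall>m. P m \<longrightarrow> id m \<le> id n)" by (rule ex_has_greatest_nat)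
  then obtain n where n: "P n" "\<forall>m. P m \<longrightarrow> m \<le> n" by auto
  then obtain G where G: "finite G" "G \<subseteq> V" "gd {0} G" "card G = n" unfolding P_def by blast
  have "span_over UNIV smul G = V"
  proof
    show "span_over UNIV smul G \<subseteq> V" by (rule dsub_span[OF V G(2)])
    show "V \<subseteq> span_over UNIV smul G"
    proof
      fix x assume x: "x \<in> V"
      show "x \<in> span_over UNIV smul G"
      proof (cases "x \<in> G")
        case True
        thus ?thesis unfolding span_over_def by (intro CollectI exI[of _ "{x}"] exI[of _ "\<lambda>_. 1"]) auto
      next
        case False
        have "card (insert x G) = n + 1" using False G by simp
        hence "\<not> gd {0} (insert x G)" using n(2) G x unfolding P_def
          by (metis Suc_eq_plus1 Suc_n_not_le_n finite_insert insert_subset)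
        then obtain c where c: "(\<Sum>g\<in>insert x G. smul (c g) g) \<in> {0}" "\<exists>g\<in>insert x G. c g \<noteq> 0"
          unfolding gd_def by blast
        have s: "smul (c x) x + (\<Sum>g\<in>G. smul (c g) g) = 0" using c(1) G(1) False by simp
        have "c x \<noteq> 0"
        proof
          assume "c x = 0"
          hence "(\<Sum>g\<in>G. smul (c g) g) \<in> {0}" using s by simp
          hence "\<forall>g\<in>G. c g = 0" using G(3) unfolding gd_def by blast
          thus False using c(2) \<open>c x = 0\<close> by auto
        qed
        from solve_x[OF this s] have "x = (\<Sum>g\<in>G. smul (- inverse (c x) * c g) g)" by simp
        thus ?thesis unfolding span_over_def using G(1)
          by (intro CollectI exI[of _ G] exI[of _ "\<lambda>g. - inverse (c x) * c g"]) simp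
      qed
    qed
  qed
  thus ?thesis using G gd_indep unfolding basis_over_def by blast
qed

lemma gd_mono0: "0 \<in> U \<Longrightarrow> gd U G \<Longrightarrow> gd {0} G"
  unfolding gd_def by auto

lemma exists_G: assumes U: "dsub U"
  shows "\<exists>G. finite G \<and> G \<subseteq> BM \<and> gd U G \<and> (\<forall>x. \<exists>c u. u \<in> U \<and> x = (\<Sum>g\<in>G. smul (c g) g) + u)"
proof -
  define P where "P n \<longleftrightarrow> (\<exists>G. G \<subseteq> BM \<and> gd U G \<and> card G = n)" for n
  have "P 0" unfolding P_def by (intro exI[of _ "{}"]) (auto simp: gd_def)
  moreover have "\<forall>n. P n \<longrightarrow> id n < card BM + 1"
  proof (intro allI impI)
    fix n assume "P n"
    then obtain G where "G \<subseteq> BM" "card G = n" unfolding P_def by blast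
    hence "n \<le> card BM" using card_mono[OF BMfin] by blast
    thus "id n < card BM + 1" by simp
  qed
  ultimately have "\<exists>n. P n \<and> (\<forall>m. P m \<longrightarrow> id m \<le> id n)" by (rule ex_has_greatest_nat)
  then obtain n where n: "P n" "\<forall>m. P m \<longrightarrow> m \<le> n" by auto
  then obtain G where G: "G \<subseteq> BM" "gd U G" "card G = n" unfolding P_def by blast
  have Gf: "finite G" using G(1) BMfin finite_subset by blast
  define Y where "Y = {(\<Sum>g\<in>G. smul (c g) g) + u | c u. u \<in> U}"
  have dY: "dsub Y" unfolding dsub_def
  proof (intro conjI ballI allI)
    show "0 \<in> Y" unfolding Y_def using U by (intro CollectI exI[of _ "\<lambda>_. 0"] exI[of _ 0]) (simp add: dsub_def)
  next
    fix x y assume "x \<in> Y" "y \<in> Y"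
    then obtain c u c' u' where "u \<in> U" "u' \<in> U" "x = (\<Sum>g\<in>G. smul (c g) g) + u" "y = (\<Sum>g\<in>G. smul (c' g) g) + u'"
      unfolding Y_def by blast
    moreover have "u + u' \<in> U" using U \<open>u \<in> U\<close> \<open>u' \<in> U\<close> by (simp add: dsub_def)
    ultimately show "x + y \<in> Y" unfolding Y_def
      by (intro CollectI exI[of _ "\<lambda>g. c g + c' g"] exI[of _ "u + u'"]) (simp add: sadd_l sum.distrib add_ac)
  next
    fix a x assume "x \<in> Y"
    then obtain c u where "u \<in> U" "x = (\<Sum>g\<in>G. smul (c g) g) + u" unfolding Y_def by blast
    moreover have "smul a u \<in> U" using U \<open>u \<in> U\<close> by (simp add: dsub_def)
    ultimately show "smul a x \<in> Y" unfolding Y_def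
      by (intro CollectI exI[of _ "\<lambda>g. a * c g"] exI[of _ "smul a u"]) (simp add: sadd_r ssum_r smult)
  qed
  have "BM \<subseteq> Y"
  proof
    fix b assume b: "b \<in> BM"
    show "b \<in> Y"
    proof (cases "b \<in> G")
      case True
      have "(\<Sum>g\<in>G. smul (if g = b then 1 else 0) g) = (\<Sum>g\<in>G. if g = b then b else 0)"
        by (rule sum.cong) auto
      also have "\<dots> = b" using True Gf by simp
      finally have "b = (\<Sum>g\<in>G. smul (if g = b then 1 else 0) g) + 0" by simp
      thus ?thesis unfolding Y_def using U by (intro CollectI exI[of _ "\<lambda>g. if g = b then 1 else 0"] exI[of _ 0]) (simp add: dsub_def)
    next
      case False
      have "card (insert b G) = n + 1" using False G Gf by simp
      have "\<not> gd U (insert b G)"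
      proof
        assume "gd U (insert b G)"
        hence "P (n + 1)" unfolding P_def using b G \<open>card (insert b G) = n + 1\<close>
          by (intro exI[of _ "insert b G"]) simp
        with n(2) have "n + 1 \<le> n" by blast
        thus False by simp
      qed
      then obtain c where c: "(\<Sum>g\<in>insert b G. smul (c g) g) \<in> U" "\<exists>g\<in>insert b G. c g \<noteq> 0"
        unfolding gd_def by blast
      define w where "w = (\<Sum>g\<in>insert b G. smul (c g) g)"
      have s: "smul (c b) b + (\<Sum>g\<in>G. smul (c g) g) = w" using Gf False by (simp add: w_def)
      have "c b \<noteq> 0"
      proof
        assume "c b = 0"
        hence "(\<Sum>g\<in>G. smul (c g) g) \<in> U" using s c(1) w_def by simp
        hence "\<forall>g\<in>G. c g = 0" using G(2) unfolding gd_def by blast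
        thus False using c(2) \<open>c b = 0\<close> by auto
      qed
      from solve_x[OF this s] have "b = (\<Sum>g\<in>G. smul (- inverse (c b) * c g) g) + smul (inverse (c b)) w" .
      moreover have "smul (inverse (c b)) w \<in> U" using U c(1) by (simp add: dsub_def w_def)
      ultimately show ?thesis unfolding Y_def
        by (intro CollectI exI[of _ "\<lambda>g. - inverse (c b) * c g"] exI[of _ "smul (inverse (c b)) w"]) simp
    qed
  qed
  hence "span_over UNIV smul BM \<subseteq> Y" by (rule dsub_span[OF dY])
  hence Yall: "UNIV \<subseteq> Y" using BMb by (simp add: basis_over_def)
  have "\<forall>x. \<exists>c u. u \<in> U \<and> x = (\<Sum>g\<in>G. smul (c g) g) + u"
  proof
    fix x
    have "x \<in> Y" using Yall by blast
    then obtain c u where "x = (\<Sum>g\<in>G. smul (c g) g) + u" "u \<in> U" unfolding Y_def by blast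
    thus "\<exists>c u. u \<in> U \<and> x = (\<Sum>g\<in>G. smul (c g) g) + u" by blast
  qed
  thus ?thesis using Gf G(1,2) by blast
qed

end



context lvs begin

lemma C_sub: assumes phi: "lin_map smul phi"
  shows "subspace_over center (hom_smul smul) (centralizer smul phi) (Hom smul)"
  unfolding subspace_over_def
proof (intro conjI ballI)
  show "centralizer smul phi \<subseteq> Hom smul" by (auto simp: centralizer_def)
  show "0 \<in> centralizer smul phi"
    using lin_0[OF phi] by (auto simp: centralizer_def Hom_def lin_map_def fun_eq_iff)
  fix x y assume x: "x \<in> centralizer smul phi" and y: "y \<in> centralizer smul phi"
  show "x + y \<in> centralizer smul phi"
    using x y lin_add[OF phi] by (auto simp: centralizer_def Hom_def lin_map_def fun_eq_iff sadd_r)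
next
  fix c :: 'a and x assume c: "c \<in> center" and x: "x \<in> centralizer smul phi"
  have cc: "c * a = a * c" for a using c by (simp add: center_def)
  show "hom_smul smul c x \<in> centralizer smul phi"
    using x lin_smul[OF phi] by (auto simp: centralizer_def Hom_def lin_map_def fun_eq_iff hom_smul_def sadd_r smult[symmetric] cc)
qed

lemma C_Fsub: assumes phi: "lin_map smul phi" shows "F.subspace (centralizer smul phi)"
proof -
  have h: "0 \<in> centralizer smul phi" "\<forall>x\<in>centralizer smul phi. \<forall>y\<in>centralizer smul phi. x + y \<in> centralizer smul phi"
    "\<forall>c\<in>center. \<forall>x\<in>centralizer smul phi. hom_smul smul c x \<in> centralizer smul phi"
    using C_sub[OF phi] unfolding subspace_over_def by blast+
  show ?thesis unfolding F.subspace_def sF_def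
    using h Rep_ctr_center by blast
qed

end

context setting begin

lemma count: assumes phi: "lin_map smul phi" and G: "finite G" "gd (range phi) G"
  and Bk: "finite Bk" "basis_over UNIV smul (ker phi) Bk"
  shows "card G \<le> card Bk"
proof -
  define U where "U = range phi"
  have phK: "phi (sK c x) = sK c (phi x)" for c x by (simp add: sK_def lin_smul[OF phi])
  have U: "M.subspace U" unfolding M.subspace_def U_def
  proof (intro conjI ballI allI)
    show "0 \<in> range phi" using lin_0[OF phi] by (metis rangeI)
    fix x y assume "x \<in> range phi" "y \<in> range phi"
    then obtain a b where "x = phi a" "y = phi b" by blast
    thus "x + y \<in> range phi" using lin_add[OF phi, of a b] by (metis rangeI)
  next
    fix c x assume "x \<in> range phi"
    then obtain a where "x = phi a" by blast
    thus "sK c x \<in> range phi" using phK[of c a] by (metis rangeI)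
  qed
  obtain Bu where Bu: "Bu \<subseteq> U" "M.independent Bu" "U \<subseteq> M.span Bu"
    using M.basis_exists by metis
  have Buf: "finite Bu"
    using M.independent_span_bound[OF finite_Pr[OF BMfin] Bu(2) subset_trans[OF subset_UNIV UNIV_span]] by blast
  define pre where "pre u = (SOME x. phi x = u)" for u
  have pre: "u \<in> U \<Longrightarrow> phi (pre u) = u" for u unfolding pre_def U_def by (metis (mono_tags) imageE someI_ex)
  have sp: "UNIV \<subseteq> M.span (pre ` Bu \<union> Pr Bk)"
  proof
    fix x
    have "phi x \<in> M.span Bu" using Bu(3) by (auto simp: U_def)
    then obtain t r where t: "finite t" "t \<subseteq> Bu" "phi x = (\<Sum>v\<in>t. sK (r v) v)"
      unfolding M.span_explicit by blast
    define y where "y = (\<Sum>v\<in>t. sK (r v) (pre v))"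
    have "phi y = (\<Sum>v\<in>t. sK (r v) (phi (pre v)))" by (simp add: y_def lin_sum[OF phi] phK)
    also have "\<dots> = phi x" using t Bu(1) pre by (auto intro!: sum.cong)
    finally have "phi (x - y) = 0" by (simp add: lin_diff[OF phi])
    hence "x - y \<in> ker phi" by (simp add: ker_def)
    hence "x - y \<in> M.span (Pr Bk)" using spanK Bk by (auto simp: basis_over_def)
    hence 1: "x - y \<in> M.span (pre ` Bu \<union> Pr Bk)" by (meson M.span_mono subsetD sup_ge2)
    have "y \<in> M.span (pre ` Bu)" unfolding y_def using t
      by (intro M.span_sum M.span_scale M.span_base) auto
    hence 2: "y \<in> M.span (pre ` Bu \<union> Pr Bk)" by (meson M.span_mono subsetD sup_ge1)
    have "x = y + (x - y)" by simp
    thus "x \<in> M.span (pre ` Bu \<union> Pr Bk)" using 1 2 M.span_add by metis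
  qed
  have ind: "M.independent (Pr G \<union> Bu)" and dis: "Pr G \<inter> Bu = {}"
    using prod_indep[OF G[unfolded U_def[symmetric]] U Bu(1,2)] by auto
  have fin2: "finite (pre ` Bu \<union> Pr Bk)" using Buf finite_Pr[OF Bk(1)] by simp
  have "card (Pr G \<union> Bu) \<le> card (pre ` Bu \<union> Pr Bk)"
    using M.independent_span_bound[OF fin2 ind] sp by blast
  also have "\<dots> \<le> card (pre ` Bu) + card (Pr Bk)" by (rule card_Un_le)
  also have "\<dots> \<le> card Bu + card BD * card Bk" using card_image_le[OF Buf, of pre] card_Pr_le[OF Bk(1)] by linarith
  finally have "card (Pr G) + card Bu \<le> card Bu + card BD * card Bk"
    using card_Un_disjoint[OF finite_Pr[OF G(1)] Buf dis] by simp
  hence "card BD * card G \<le> card BD * card Bk" using card_Pr[OF G] U M.subspace_0 by (simp add: U_def)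
  thus ?thesis using card_BD_pos by simp
qed

end



context setting begin

lemma lin_funpow: "lin_map smul f \<Longrightarrow> lin_map smul (f ^^ m)"
  by (induct m) (auto simp: lin_map_def)

lemma generation:
  assumes phi: "lin_map smul phi" and nil: "nilpotent_map phi"
    and Gsp: "\<forall>x. \<exists>c u. u \<in> range phi \<and> x = (\<Sum>g\<in>G. smul (c g) g) + u"
    and psi: "lin_map smul psi" "psi \<circ> phi = phi \<circ> psi" "\<forall>g\<in>G. psi g = 0"
  shows "psi x = 0"
proof -
  define N where "N = {x. \<forall>psi. lin_map smul psi \<and> psi \<circ> phi = phi \<circ> psi \<and> (\<forall>g\<in>G. psi g = 0) \<longrightarrow> psi x = 0}"
  have dN: "dsub N" unfolding dsub_def N_def by (auto simp: lin_0 lin_add lin_smul)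
  have GN: "g \<in> N" if "g \<in> G" for g using that by (auto simp: N_def)
  have phN: "phi x \<in> N" if "x \<in> N" for x
  proof -
    { fix p assume p: "lin_map smul p" "p \<circ> phi = phi \<circ> p" "\<forall>g\<in>G. p g = 0"
      have "p (phi x) = phi (p x)" using p(2) by (metis comp_apply)
      also have "p x = 0" using that p by (auto simp: N_def)
      finally have "p (phi x) = 0" by (simp add: lin_0[OF phi]) }
    thus ?thesis by (auto simp: N_def)
  qed
  have phmN: "(phi ^^ m) x \<in> N" if "x \<in> N" for x m
    using that by (induct m) (auto intro: phN)
  have step: "\<exists>n\<in>N. \<exists>y. x = n + (phi ^^ m) y" for x m
  proof (induct m arbitrary: x)
    case 0 show ?case using dN by (intro bexI[of _ 0]) (auto simp: dsub_def)
  next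
    case (Suc m)
    obtain n y where n: "n \<in> N" "x = n + (phi ^^ m) y" using Suc by blast
    obtain c u where cu: "u \<in> range phi" "y = (\<Sum>g\<in>G. smul (c g) g) + u" using Gsp by blast
    obtain z where z: "u = phi z" using cu(1) by blast
    define s where "s = (\<Sum>g\<in>G. smul (c g) g)"
    have sN: "s \<in> N" unfolding s_def using dN GN by (intro dsub_sum) (auto simp: dsub_def)
    have "(phi ^^ m) y = (phi ^^ m) s + (phi ^^ Suc m) z"
      using cu z lin_add[OF lin_funpow[OF phi]] by (simp add: s_def funpow_Suc_right del: funpow.simps)
    hence "x = (n + (phi ^^ m) s) + (phi ^^ Suc m) z" using n by (simp add: add.assoc)
    moreover have "n + (phi ^^ m) s \<in> N" using dN n(1) phmN[OF sN] by (simp add: dsub_def)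
    ultimately show ?case by blast
  qed
  obtain m where m: "(phi ^^ m) = (\<lambda>_. 0)" using nil by (auto simp: nilpotent_map_def)
  obtain n y where "n \<in> N" "x = n + (phi ^^ m) y" using step by blast
  hence "x \<in> N" using m by simp
  thus ?thesis using psi by (auto simp: N_def)
qed

lemma main:
  assumes phi: "lin_map smul phi" and nil: "nilpotent_map phi"
    and Bk: "finite Bk" "basis_over UNIV smul (ker phi) Bk"
  shows "fin_dim_over center (hom_smul smul) (centralizer smul phi)"
    "\<And>B. finite B \<Longrightarrow> basis_over center (hom_smul smul) (centralizer smul phi) B \<Longrightarrow> card B \<le> card BD * card Bk * card BM"
proof -
  define C where "C = centralizer smul phi"
  have dU: "dsub (range phi)" unfolding dsub_def
  proof (intro conjI ballI allI)
    show "0 \<in> range phi" using lin_0[OF phi] by (metis rangeI)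
    fix x y assume "x \<in> range phi" "y \<in> range phi"
    then obtain a b where "x = phi a" "y = phi b" by blast
    thus "x + y \<in> range phi" using lin_add[OF phi, of a b] by (metis rangeI)
  next
    fix c x assume "x \<in> range phi"
    then obtain a where "x = phi a" by blast
    thus "smul c x \<in> range phi" using lin_smul[OF phi, of c a] by (metis rangeI)
  qed
  obtain G where G: "finite G" "G \<subseteq> BM" "gd (range phi) G" "\<forall>x. \<exists>c u. u \<in> range phi \<and> x = (\<Sum>g\<in>G. smul (c g) g) + u"
    using exists_G[OF dU] by blast
  have cG: "card G \<le> card Bk" by (rule count[OF phi G(1,3) Bk])
  have CF: "F.subspace C" unfolding C_def by (rule C_Fsub[OF phi])
  define T where "T f = (\<lambda>x. if x \<in> G then f x else 0)" for f :: "'b \<Rightarrow> 'b"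
  have linT: "Vector_Spaces.linear sF sF T"
    using F.vector_space_axioms by (intro Vector_Spaces.linear_iff[THEN iffD2]) (auto simp: T_def fun_eq_iff sF_apply)
  have injT: "inj_on T C"
  proof (rule inj_onI)
    fix p q assume p: "p \<in> C" and q: "q \<in> C" and e: "T p = T q"
    have pq: "lin_map smul (\<lambda>x. p x - q x)" using p q by (auto simp: C_def centralizer_def Hom_def lin_map_def sdiff_r)
    have pc: "(\<lambda>x. p x - q x) \<circ> phi = phi \<circ> (\<lambda>x. p x - q x)"
      using p q lin_diff[OF phi] by (auto simp: C_def centralizer_def fun_eq_iff)
    have "\<forall>g\<in>G. p g - q g = 0" using e by (auto simp: T_def fun_eq_iff) (metis)
    hence "\<And>x. p x - q x = 0" using generation[OF phi nil G(4) pq pc] by blast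
    thus "p = q" by (simp add: fun_eq_iff)
  qed
  define W where "W = (\<lambda>(g,w). (\<lambda>x. if x = g then w else (0::'b))) ` (G \<times> Pr BM)"
  have Wf: "finite W" using G(1) finite_Pr[OF BMfin] by (simp add: W_def)
  have cW: "card W \<le> card Bk * (card BD * card BM)"
  proof -
    have "card W \<le> card (G \<times> Pr BM)" unfolding W_def using G(1) finite_Pr[OF BMfin] by (intro card_image_le) simp
    also have "\<dots> = card G * card (Pr BM)" by (simp add: card_cartesian_product)
    also have "\<dots> \<le> card Bk * (card BD * card BM)" using cG card_Pr_le[OF BMfin] by (simp add: mult_le_mono)
    finally show ?thesis .
  qed
  have TW: "T ` C \<subseteq> F.span W"
  proof
    fix h assume "h \<in> T ` C"
    then obtain p where p: "h = T p" by blast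
    have "h = (\<Sum>g\<in>G. (\<lambda>x. if x = g then p g else 0))"
      using G(1) by (auto simp: p T_def fun_eq_iff sum_fun_apply)
    also have "\<dots> \<in> F.span W"
    proof (intro F.span_sum)
      fix g assume g: "g \<in> G"
      have "p g \<in> M.span (Pr BM)" using UNIV_span by blast
      then obtain t r where t: "finite t" "t \<subseteq> Pr BM" "p g = (\<Sum>v\<in>t. sK (r v) v)" unfolding M.span_explicit by blast
      have "(\<lambda>x. if x = g then p g else 0) = (\<Sum>v\<in>t. sF (r v) (\<lambda>x. if x = g then v else 0))"
        using t by (auto simp: fun_eq_iff sum_fun_apply sF_apply sK_def)
      also have "\<dots> \<in> F.span W" using t g
        by (intro F.span_sum F.span_scale F.span_base) (auto simp: W_def)
      finally show "(\<lambda>x. if x = g then p g else 0) \<in> F.span W" .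
    qed
    finally show "h \<in> F.span W" .
  qed
  interpret FF: vector_space_pair sF sF ..
  have bound: "finite B \<and> card B \<le> card W" if B: "B \<subseteq> C" "F.independent B" for B
  proof -
    have "F.span B \<subseteq> C" using B CF F.span_minimal by blast
    hence inj: "inj_on T (F.span B)" using injT inj_on_subset by blast
    have "F.independent (T ` B)" using FF.linear_independent_injective_image[OF linT B(2) inj] .
    moreover have "T ` B \<subseteq> F.span W" using TW B by blast
    ultimately have "finite (T ` B) \<and> card (T ` B) \<le> card W" using F.independent_span_bound[OF Wf] by blast
    moreover have "inj_on T B" using injT B inj_on_subset by blast
    ultimately show ?thesis using card_image finite_image_iff by metis
  qed
  obtain B where B: "B \<subseteq> C" "F.independent B" "C \<subseteq> F.span B" using F.basis_exists by metis
  have "F.span B = C" using B CF F.span_minimal by blast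
  hence "basis_over center (hom_smul smul) C B" using B F_indep_to F_span_eq by (simp add: basis_over_def)
  thus "fin_dim_over center (hom_smul smul) (centralizer smul phi)"
    using bound[OF B(1,2)] unfolding fin_dim_over_def C_def by blast
  fix B' assume B': "finite B'" "basis_over center (hom_smul smul) (centralizer smul phi) B'"
  have "B' \<subseteq> C" "F.independent B'" using B' F_indep_from by (auto simp: basis_over_def C_def)
  hence "card B' \<le> card W" using bound by blast
  thus "card B' \<le> card BD * card Bk * card BM" using cW by (simp add: mult.commute mult.left_commute)
qed

end


theorem corollary4p7:
  fixes smul :: "'a::division_ring \<Rightarrow> 'b::ab_group_add \<Rightarrow> 'b"
    and phi :: "'b \<Rightarrow> 'b"
  assumes "fin_dim_over (center :: 'a set) (*) (UNIV :: 'a set)"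
    and "left_vector_space smul"
    and "fin_dim_over (UNIV :: 'a set) smul (UNIV :: 'b set)"
    and "lin_map smul phi"
    and "nilpotent_map phi"
  shows "subspace_over (center :: 'a set) (hom_smul smul) (centralizer smul phi) (Hom smul)
     \<and> fin_dim_over (center :: 'a set) (hom_smul smul) (centralizer smul phi)
     \<and> dim_over (center :: 'a set) (hom_smul smul) (centralizer smul phi)
         \<le> dim_over (center :: 'a set) (*) (UNIV :: 'a set)
            * dim_over (UNIV :: 'a set) smul (ker phi)
            * dim_over (UNIV :: 'a set) smul (UNIV :: 'b set)"
proof -
  interpret L: lvs smul by (rule lvs.intro) (rule assms(2))
  define BD where "BD = (SOME B. finite B \<and> basis_over (center :: 'a set) (*) UNIV B)"
  have BD: "finite BD \<and> basis_over (center :: 'a set) (*) UNIV BD"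
    unfolding BD_def using assms(1) unfolding fin_dim_over_def by (rule someI_ex)
  define BM where "BM = (SOME B. finite B \<and> basis_over (UNIV :: 'a set) smul UNIV B)"
  have BM: "finite BM \<and> basis_over (UNIV :: 'a set) smul UNIV BM"
    unfolding BM_def using assms(3) unfolding fin_dim_over_def by (rule someI_ex)
  interpret S: setting smul BD BM
    by (rule setting.intro[OF L.lvs_axioms]) (unfold_locales, use BD BM in auto)
  have dk: "S.dsub (ker phi)" unfolding S.dsub_def ker_def
    using L.lin_0[OF assms(4)] L.lin_add[OF assms(4)] L.lin_smul[OF assms(4)] by auto
  define Bk where "Bk = (SOME B. finite B \<and> basis_over (UNIV :: 'a set) smul (ker phi) B)"
  have Bk: "finite Bk \<and> basis_over (UNIV :: 'a set) smul (ker phi) Bk"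
    unfolding Bk_def using S.exists_basis[OF dk] by (rule someI_ex)
  have fd: "fin_dim_over (center :: 'a set) (hom_smul smul) (centralizer smul phi)"
    using S.main(1)[OF assms(4) assms(5)] Bk by blast
  define BC where "BC = (SOME B. finite B \<and> basis_over (center :: 'a set) (hom_smul smul) (centralizer smul phi) B)"
  have BC: "finite BC \<and> basis_over (center :: 'a set) (hom_smul smul) (centralizer smul phi) BC"
    unfolding BC_def using fd unfolding fin_dim_over_def by (rule someI_ex)
  have "card BC \<le> card BD * card Bk * card BM"
    using S.main(2)[OF assms(4) assms(5)] Bk BC by blast
  moreover have "dim_over (center :: 'a set) (hom_smul smul) (centralizer smul phi) = card BC"
    unfolding dim_over_def BC_def ..
  moreover have "dim_over (center :: 'a set) (*) (UNIV :: 'a set) = card BD"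
    unfolding dim_over_def BD_def ..
  moreover have "dim_over (UNIV :: 'a set) smul (ker phi) = card Bk"
    unfolding dim_over_def Bk_def ..
  moreover have "dim_over (UNIV :: 'a set) smul (UNIV :: 'b set) = card BM"
    unfolding dim_over_def BM_def ..
  ultimately show ?thesis using L.C_sub[OF assms(4)] fd by simp
qed

end
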